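(* Let $u_1,\ldots,u_N\ge 2$ be positive integers, and suppose there is an index set $\Gamma\subset\{1,\ldots,N-1\}$ such that $\prod_{k\in\Gamma}u_k=u_N\cdot\prod_{k\in\Gamma^c}u_k$, where $\Gamma^c=\{1,\ldots,N-1\}\setminus\Gamma$. Set $u_{\max}:=\max\{u_1,\ldots,u_{N-1}\}$. Let ${\bm x}=(x(0),\ldots,x(N-1))\in\mathbb{C}^N$ be the vector with $x(0)=u_{\max}^{N-1}$ whose $Z$-transform is $$X(z):=\sum_{k=0}^{N-1}x(k)z^{-k}=x(0)z^{-(N-1)}(z-\beta_1)\cdots(z-\beta_{N-1}),$$ where $\beta_k=-u_k$ if $k\in\Gamma$ and $\beta_k=-1/u_k$ if $k\in\Gamma^c$. Let ${\bm x}_m\in\mathbb{C}^N$ satisfy $\|{\bm x}_m-{\bm x}\|\le u_{\max}^{-2N}$ (Euclidean norm), and let $X_m(z)=\sum_{k=0}^{N-1}x_m(k)z^{-k}$ be its $Z$-transform. Then for each $k\in\{1,\ldots,N-1\}$: (i) if $1/\beta_k$ is not a zero of $X(z)$, then $|X_m(1/\beta_k)|\ge|X_m(\beta_k)|+c_0$ with $c_0:=1-2u_{\max}^{-N}$; (ii) if $1/\beta_k$ is a zero of $X(z)$, then $\max\{|X_m(\beta_k)|,|X_m(1/\beta_k)|\}\le u_{\max}^{-N}$. *)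

theory Defs
  imports Complex_Main
begin

definition ztrans :: "nat \<Rightarrow> (nat \<Rightarrow> complex) \<Rightarrow> complex \<Rightarrow> complex" where
  "ztrans N x z = (\<Sum>k<N. x k * inverse z ^ k)"

definition vnorm :: "nat \<Rightarrow> (nat \<Rightarrow> complex) \<Rightarrow> real" where
  "vnorm N x = sqrt (\<Sum>k<N. (cmod (x k))\<^sup>2)"

end

theory Submission
  imports Defs
begin

lemma geom_le: "(U::real) \<ge> 2 \<Longrightarrow> (\<Sum>k<n. U^k) \<le> U^n"
proof (induction n)
  case 0 then show ?case by simp
next
  case (Suc n)
  have "(\<Sum>k<Suc n. U^k) = (\<Sum>k<n. U^k) + U^n" by simp
  also have "\<dots> \<le> 2 * U^n" using Suc by simp
  also have "\<dots> \<le> U * U^n" using Suc.prems by (intro mult_right_mono) auto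
  finally show ?case by simp
qed

lemma err_bound:
  fixes e :: "nat \<Rightarrow> complex" and w :: complex and U :: real
  assumes U2: "U \<ge> 2" and wU: "cmod (inverse w) \<le> U" and ev: "vnorm N e \<le> inverse (U^(2*N))"
  shows "cmod (\<Sum>k<N. e k * inverse w ^ k) \<le> inverse (U^N)"
proof -
  have ek: "cmod (e k) \<le> vnorm N e" if "k<N" for k
  proof -
    have "(cmod (e k))^2 \<le> (\<Sum>j<N. (cmod (e j))^2)" by (rule member_le_sum) (use that in auto)
    hence "sqrt ((cmod (e k))^2) \<le> vnorm N e" unfolding vnorm_def by (rule real_sqrt_le_mono)
    thus ?thesis by simp
  qed
  have vn0: "vnorm N e \<ge> 0" unfolding vnorm_def by (auto intro: sum_nonneg)
  have "cmod (\<Sum>k<N. e k * inverse w ^ k) \<le> (\<Sum>k<N. cmod (e k * inverse w ^ k))" by (rule norm_sum)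
  also have "\<dots> \<le> (\<Sum>k<N. vnorm N e * U^k)"
  proof (rule sum_mono)
    fix k assume "k \<in> {..<N}"
    then have "cmod (e k) \<le> vnorm N e" using ek by auto
    moreover have "cmod (inverse w) ^ k \<le> U^k" using wU by (intro power_mono) auto
    ultimately have "cmod (e k) * cmod (inverse w) ^ k \<le> vnorm N e * U^k"
      using vn0 by (intro mult_mono) auto
    then show "cmod (e k * inverse w ^ k) \<le> vnorm N e * U^k" by (simp add: norm_mult norm_power)
  qed
  also have "\<dots> = vnorm N e * (\<Sum>k<N. U^k)" by (simp add: sum_distrib_left)
  also have "\<dots> \<le> inverse (U^(2*N)) * U^N"
    using ev geom_le[OF U2, of N] vn0 U2 by (intro mult_mono) (auto intro: sum_nonneg)
  also have "\<dots> = inverse (U^N)"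
  proof -
    have "U^(2*N) = U^N * U^N" by (simp add: mult_2 power_add)
    moreover have "U^N \<noteq> 0" using U2 by simp
    ultimately show ?thesis by (simp add: field_simps)
  qed
  finally show ?thesis .
qed

theorem lemma3p1:
  fixes N :: nat and u :: "nat \<Rightarrow> nat" and \<Gamma> :: "nat set"
    and \<beta> :: "nat \<Rightarrow> complex" and x xm :: "nat \<Rightarrow> complex" and umax :: real
  assumes u_ge: "\<And>k. k \<in> {1..N} \<Longrightarrow> u k \<ge> 2"
    and \<Gamma>_sub: "\<Gamma> \<subseteq> {1..N-1}"
    and prod_eq: "(\<Prod>k\<in>\<Gamma>. u k) = u N * (\<Prod>k\<in>{1..N-1} - \<Gamma>. u k)"
    and umax_def: "umax = real (Max (u ` {1..N-1}))"
    and \<beta>_def: "\<And>k. \<beta> k = (if k \<in> \<Gamma> then - of_nat (u k) else - 1 / of_nat (u k))"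
    and x0: "x 0 = of_real (umax ^ (N - 1))"
    and xZ: "\<And>z. z \<noteq> 0 \<Longrightarrow>
              ztrans N x z = x 0 * inverse z ^ (N - 1) * (\<Prod>j\<in>{1..N-1}. (z - \<beta> j))"
    and xm_close: "vnorm N (\<lambda>k. xm k - x k) \<le> inverse (umax ^ (2 * N))"
  shows "\<forall>k\<in>{1..N-1}.
           (ztrans N x (1 / \<beta> k) \<noteq> 0 \<longrightarrow>
              cmod (ztrans N xm (1 / \<beta> k)) \<ge> cmod (ztrans N xm (\<beta> k)) + (1 - 2 * inverse (umax ^ N)))
         \<and> (ztrans N x (1 / \<beta> k) = 0 \<longrightarrow>
              max (cmod (ztrans N xm (\<beta> k))) (cmod (ztrans N xm (1 / \<beta> k))) \<le> inverse (umax ^ N))"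
proof
  fix k assume k: "k \<in> {1..N-1}"
  define b where "b j = (if j \<in> \<Gamma> then - real (u j) else - 1 / real (u j))" for j
  have \<beta>b: "\<beta> j = complex_of_real (b j)" for j
    unfolding \<beta>_def b_def by simp
  have uge: "real (u j) \<ge> 2" if "j \<in> {1..N-1}" for j
    using u_ge[of j] that by auto
  have umx: "real (u j) \<le> umax" if "j \<in> {1..N-1}" for j
    unfolding umax_def using that by (auto intro: Max_ge)
  have U2: "umax \<ge> 2" using uge[OF k] umx[OF k] by linarith
  have bk0: "b k \<noteq> 0" using uge[OF k] unfolding b_def by auto
  have absb: "\<bar>b k\<bar> \<le> umax" "\<bar>1 / b k\<bar> \<le> umax"
  proof -
    have h: "1 / real (u k) \<le> 1" using uge[OF k] by simp
    have h2: "real (u k) > 0" using uge[OF k] by simp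
    have "\<bar>b k\<bar> \<le> umax \<and> \<bar>1 / b k\<bar> \<le> umax"
    proof (cases "k \<in> \<Gamma>")
      case True
      then have "b k = - real (u k)" unfolding b_def by simp
      then have "\<bar>b k\<bar> = real (u k)" "\<bar>1 / b k\<bar> = 1 / real (u k)" by simp_all
      then show ?thesis using h umx[OF k] U2 by linarith
    next
      case False
      then have "b k = - 1 / real (u k)" unfolding b_def by simp
      then have "\<bar>b k\<bar> = 1 / real (u k)" "\<bar>1 / b k\<bar> = real (u k)" using h2 by simp_all
      then show ?thesis using h umx[OF k] U2 by linarith
    qed
    then show "\<bar>b k\<bar> \<le> umax" "\<bar>1 / b k\<bar> \<le> umax" by simp_all
  qed
  have invb: "cmod (inverse (\<beta> k)) \<le> umax" and invib: "cmod (inverse (1 / \<beta> k)) \<le> umax"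
  proof -
    have "cmod (inverse (\<beta> k)) = inverse \<bar>b k\<bar>" unfolding \<beta>b by (simp only: norm_inverse norm_of_real)
    then show "cmod (inverse (\<beta> k)) \<le> umax" using absb(2) by (simp add: inverse_eq_divide)
    have "cmod (inverse (1 / \<beta> k)) = \<bar>b k\<bar>" unfolding \<beta>b by simp
    then show "cmod (inverse (1 / \<beta> k)) \<le> umax" using absb(1) by simp
  qed
  have diff: "ztrans N xm w - ztrans N x w = (\<Sum>j<N. (xm j - x j) * inverse w ^ j)" for w
    unfolding ztrans_def by (simp add: sum_subtractf algebra_simps)
  have E1: "cmod (ztrans N xm (\<beta> k) - ztrans N x (\<beta> k)) \<le> inverse (umax ^ N)"
    unfolding diff using err_bound[OF U2 invb xm_close] .
  have E2: "cmod (ztrans N xm (1 / \<beta> k) - ztrans N x (1 / \<beta> k)) \<le> inverse (umax ^ N)"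
    unfolding diff using err_bound[OF U2 invib xm_close] .
  have bne: "\<beta> k \<noteq> 0" using bk0 \<beta>b by simp
  have X0: "ztrans N x (\<beta> k) = 0"
  proof -
    have "(\<Prod>j\<in>{1..N-1}. (\<beta> k - \<beta> j)) = 0"
      by (rule prod_zero) (use k in auto)
    then show ?thesis using xZ[OF bne] by simp
  qed
  have Xm1: "cmod (ztrans N xm (\<beta> k)) \<le> inverse (umax ^ N)" using E1 X0 by simp
  show "(ztrans N x (1 / \<beta> k) \<noteq> 0 \<longrightarrow>
              cmod (ztrans N xm (1 / \<beta> k)) \<ge> cmod (ztrans N xm (\<beta> k)) + (1 - 2 * inverse (umax ^ N)))
         \<and> (ztrans N x (1 / \<beta> k) = 0 \<longrightarrow>
              max (cmod (ztrans N xm (\<beta> k))) (cmod (ztrans N xm (1 / \<beta> k))) \<le> inverse (umax ^ N))"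
  proof (intro conjI impI)
    assume "ztrans N x (1 / \<beta> k) = 0"
    then show "max (cmod (ztrans N xm (\<beta> k))) (cmod (ztrans N xm (1 / \<beta> k))) \<le> inverse (umax ^ N)"
      using Xm1 E2 by simp
  next
    assume nz: "ztrans N x (1 / \<beta> k) \<noteq> 0"
    have big: "cmod (ztrans N x (1 / \<beta> k)) \<ge> 1"
    proof -
      have eq: "ztrans N x (1 / \<beta> k) = complex_of_real (umax ^ (N - 1) * b k ^ (N-1) * (\<Prod>j\<in>{1..N-1}. (1 / b k - b j)))"
        using xZ[of "1 / \<beta> k"] bne unfolding x0 \<beta>b by simp
      have pnz: "(\<Prod>j\<in>{1..N-1}. (1 / b k - b j)) \<noteq> 0" 
      proof -
        have "umax ^ (N - 1) * b k ^ (N-1) * (\<Prod>j\<in>{1..N-1}. (1 / b k - b j)) \<noteq> 0"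
          using nz unfolding eq by (metis of_real_0)
        then show ?thesis by (metis mult_zero_right)
      qed
      have fnz: "1 / b k - b j \<noteq> 0" if "j \<in> {1..N-1}" for j
        using pnz that by (auto simp: prod_zero_iff)
      have uk2: "real (u k) \<ge> 2" using uge[OF k] .
      have ukm: "real (u k) \<le> umax" using umx[OF k] .
      have hk1: "1 / real (u k) \<le> 1" using uk2 by simp
      have "1 \<le> \<bar>umax ^ (N - 1) * b k ^ (N-1) * (\<Prod>j\<in>{1..N-1}. (1 / b k - b j))\<bar>"
      proof (cases "k \<in> \<Gamma>")
        case True
        define c where "c = 1 / (real (u k) * umax)"
        have c0: "c \<ge> 0" using uk2 U2 unfolding c_def by simp
        have fac: "c \<le> \<bar>1 / b k - b j\<bar>" if j: "j \<in> {1..N-1}" for j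
        proof (cases "j \<in> \<Gamma>")
          case True
          have "1 / b k - b j = real (u j) - 1 / real (u k)"
            using True \<open>k \<in> \<Gamma>\<close> unfolding b_def by simp
          then have "\<bar>1 / b k - b j\<bar> = \<bar>real (u j) - 1 / real (u k)\<bar>" by simp
          also have "\<dots> = real (u j) - 1 / real (u k)" using hk1 uge[OF j] by simp
          finally have "\<bar>1 / b k - b j\<bar> = real (u j) - 1 / real (u k)" .
          moreover have "c \<le> 1"
          proof -
            have "1 \<le> real (u k) * umax" using mult_mono[of 1 "real (u k)" 1 umax] uk2 U2 by simp
            then show ?thesis unfolding c_def by simp
          qed
          ultimately show ?thesis using uge[OF j] hk1 by linarith
        next
          case False
          have ne: "u j \<noteq> u k"
          proof
            assume e: "u j = u k"
            have "1 / b k - b j = 0" using False \<open>k \<in> \<Gamma>\<close> unfolding b_def e by simp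
            then show False using fnz[OF j] by simp
          qed
          have d1: "1 \<le> \<bar>real (u k) - real (u j)\<bar>" using ne by linarith
          have pj: "real (u j) > 0" "real (u k) > 0" using uge[OF j] uk2 by simp_all
          have "1 / b k - b j = 1 / real (u j) - 1 / real (u k)"
            using False \<open>k \<in> \<Gamma>\<close> unfolding b_def by simp
          also have "\<dots> = (real (u k) - real (u j)) / (real (u k) * real (u j))"
            using pj by (simp add: diff_divide_distrib)
          finally have "\<bar>1 / b k - b j\<bar> = \<bar>real (u k) - real (u j)\<bar> / \<bar>real (u k) * real (u j)\<bar>"
            by (simp only: abs_divide)
          also have "\<bar>real (u k) * real (u j)\<bar> = real (u k) * real (u j)" by simp
          finally have "\<bar>1 / b k - b j\<bar> = \<bar>real (u k) - real (u j)\<bar> / (real (u k) * real (u j))" .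
          also have "\<dots> \<ge> 1 / (real (u k) * real (u j))"
            using d1 uge[OF j] uk2 by (intro divide_right_mono) auto
          finally have "\<bar>1 / b k - b j\<bar> \<ge> 1 / (real (u k) * real (u j))" .
          moreover have "c \<le> 1 / (real (u k) * real (u j))" unfolding c_def
            using umx[OF j] uge[OF j] uk2 by (intro divide_left_mono mult_left_mono) auto
          ultimately show ?thesis by linarith
        qed
        have "c ^ (N-1) \<le> (\<Prod>j\<in>{1..N-1}. \<bar>1 / b k - b j\<bar>)"
          using prod_mono[of "{1..N-1}" "\<lambda>_. c" "\<lambda>j. \<bar>1 / b k - b j\<bar>"] fac c0 by simp
        then have P: "c ^ (N-1) \<le> \<bar>\<Prod>j\<in>{1..N-1}. 1 / b k - b j\<bar>" by (simp add: abs_prod)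
        have bk: "\<bar>b k\<bar> = real (u k)" using True unfolding b_def by simp
        have "1 = umax ^ (N-1) * real (u k) ^ (N-1) * c ^ (N-1)"
          unfolding c_def using uk2 U2 by (simp add: power_divide power_mult_distrib)
        also have "\<dots> \<le> umax ^ (N-1) * real (u k) ^ (N-1) * \<bar>\<Prod>j\<in>{1..N-1}. 1 / b k - b j\<bar>"
          using P U2 uk2 by (intro mult_left_mono) auto
        also have "\<dots> = \<bar>umax ^ (N - 1) * b k ^ (N-1) * (\<Prod>j\<in>{1..N-1}. (1 / b k - b j))\<bar>"
          using U2 by (simp add: abs_mult power_abs bk)
        finally show ?thesis .
      next
        case False
        have fac: "1 \<le> \<bar>1 / b k - b j\<bar>" if j: "j \<in> {1..N-1}" for j
        proof (cases "j \<in> \<Gamma>")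
          case True
          have "1 / b k - b j = real (u j) - real (u k)"
            using True \<open>k \<notin> \<Gamma>\<close> unfolding b_def by simp
          then have ne: "u j \<noteq> u k" and "\<bar>1 / b k - b j\<bar> = \<bar>real (u j) - real (u k)\<bar>"
            using fnz[OF j] by auto
          then show ?thesis using ne by linarith
        next
          case False
          have "1 / b k - b j = 1 / real (u j) - real (u k)"
            using False \<open>k \<notin> \<Gamma>\<close> unfolding b_def by simp
          moreover have "1 / real (u j) \<le> 1" using uge[OF j] by simp
          ultimately have "\<bar>1 / b k - b j\<bar> = real (u k) - 1 / real (u j)" using uk2 by simp
          moreover have "1 / real (u j) \<le> 1" using uge[OF j] by simp
          ultimately show ?thesis using uk2 by linarith
        qed
        have "(1::real) ^ (N-1) \<le> (\<Prod>j\<in>{1..N-1}. \<bar>1 / b k - b j\<bar>)"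
          using prod_mono[of "{1..N-1}" "\<lambda>_. 1::real" "\<lambda>j. \<bar>1 / b k - b j\<bar>"] fac by simp
        then have P: "1 \<le> \<bar>\<Prod>j\<in>{1..N-1}. 1 / b k - b j\<bar>" by (simp add: abs_prod)
        have bk: "\<bar>b k\<bar> = 1 / real (u k)" using False uk2 unfolding b_def by simp
        have "1 \<le> (umax / real (u k)) ^ (N-1)" using ukm uk2 by (intro one_le_power) simp
        also have "\<dots> = umax ^ (N-1) * \<bar>b k\<bar> ^ (N-1)" by (simp add: bk power_divide)
        also have "\<dots> \<le> umax ^ (N-1) * \<bar>b k\<bar> ^ (N-1) * \<bar>\<Prod>j\<in>{1..N-1}. 1 / b k - b j\<bar>"
          using mult_left_mono[OF P, of "umax ^ (N-1) * \<bar>b k\<bar> ^ (N-1)"] U2 by simp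
        also have "\<dots> = \<bar>umax ^ (N - 1) * b k ^ (N-1) * (\<Prod>j\<in>{1..N-1}. (1 / b k - b j))\<bar>"
          using U2 by (simp add: abs_mult power_abs)
        finally show ?thesis .
      qed
      then show ?thesis unfolding eq norm_of_real .
    qed
    have "cmod (ztrans N x (1 / \<beta> k)) \<le> cmod (ztrans N xm (1 / \<beta> k)) + cmod (ztrans N xm (1 / \<beta> k) - ztrans N x (1 / \<beta> k))"
      by (metis norm_triangle_ineq2 add.commute diff_le_eq norm_minus_commute)
    then show "cmod (ztrans N xm (1 / \<beta> k)) \<ge> cmod (ztrans N xm (\<beta> k)) + (1 - 2 * inverse (umax ^ N))"
      using big E2 Xm1 by linarith
  qed
qed

end
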